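(* Fix $r\in(1,\infty)$ and a $w$-moderate weight $m$, assume $RC_K:f\mapsto f*K$ is well-defined and bounded on $L_{r,m}(G)$, and assume there is a continuous $W:G\to\mathbb C$ with $W*K=K$ and $\check M^\rho_QW\in L_{1,w}(G)\cap L_{1,w\Delta^{-1}}(G)$ for some compact unit neighbourhood $Q$. Let $X=(x_i)_{i\in I}$ be relatively separated and $(m_X)_i=m(x_i)$. Then: (i) if $U$ is a compact unit neighbourhood and $\Psi=(\psi_i)_{i\in I}$ is a $U$-BUPU with localizing family $X$, the analysis operator $L_{r,m}(G)\to\ell_{r,m_X}(I)$, $f\mapsto(\langle f,\psi_i\rangle_{L_2})_{i\in I}$, is well-defined and bounded; (ii) the synthesis operator $\ell_{r,m_X}(I)\to L_{r,m}(G)$, $(c_i)\mapsto\sum_{i\in I}c_i\,\lambda(x_i)W$, is well-defined and bounded, the defining series converging absolutely almost everywhere.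
   Context: Setting. $G$ is a locally compact, second countable group with left Haar measure, identity $e$, modular function $\Delta$; $(f*g)(x)=\int_G f(y)g(y^{-1}x)\,dy$, $\lambda(x)f(y)=f(x^{-1}y)$, $\langle f,g\rangle_{L_2}=\int_Gf\overline g$. $w:G\to(0,\infty)$ continuous with $w(xy)\le w(x)w(y)$, $w(x)=w(x^{-1})$; $L_{p,v}(G)$: measurable $f$ with $\|vf\|_{L_p}<\infty$; $\ell_{r,\theta}(I)=\{c:(\theta_ic_i)\in\ell_r(I)\}$. A continuous $m$ is $w$-moderate if $m(xy)\le w(x)m(y)$ and $m(xy)\le m(x)w(y)$. $K(x)=\langle u,\pi(x)u\rangle_{\mathcal H}$ is the reproducing kernel of a strongly continuous unitary representation on a separable Hilbert space with $u$ such that $v\mapsto\langle v,\pi(\cdot)u\rangle$ is an isometry into $L_2(G)$; standing assumption $K\in L_{p,w}(G)$ for all $p\in(1,\infty)$. $\check M^\rho_QW(x)=\|W\|_{L_\infty(Qx)}$. Relatively separated: for every compact unit neighbourhood $Q'$ there is $N$ with $\sum_i\chi_{x_iQ'}\le N$ on $G$. $U$-BUPU with localizing family $X$: measurable $\psi_i:G\to[0,1]$, $X$ relatively separated, $\psi_i\equiv0$ off $x_iU$, $\sum_i\psi_i\equiv1$. *)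

theory Defs
  imports "HOL-Analysis.Analysis" "HOL-Probability.Essential_Supremum"
begin

text \<open>The group G is a type 'g of class group_add (non-commutative groups,
 written additively: x + y is the group product, -x the inverse, 0 the identity).\<close>

definition lc_haar_group ::
  "'g::{group_add,t2_space,second_countable_topology} measure \<Rightarrow> ('g \<Rightarrow> real) \<Rightarrow> bool" where
  "lc_haar_group \<mu> \<Delta> \<longleftrightarrow>
     continuous_on UNIV (\<lambda>p::'g \<times> 'g. fst p + snd p) \<and>
     continuous_on UNIV (uminus :: 'g \<Rightarrow> 'g) \<and>
     locally_compact_space (euclidean :: 'g topology) \<and>
     sets \<mu> = sets borel \<and>
     (\<forall>A \<in> sets borel. \<forall>x. emeasure \<mu> ((\<lambda>y. x + y) ` A) = emeasure \<mu> A) \<and>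
     (\<forall>C. compact C \<longrightarrow> emeasure \<mu> C < \<infinity>) \<and>
     (\<forall>V. open V \<and> V \<noteq> {} \<longrightarrow> emeasure \<mu> V > 0) \<and>
     (\<forall>x. \<Delta> x > 0) \<and>
     (\<forall>A \<in> sets borel. \<forall>x. emeasure \<mu> ((\<lambda>y. y + x) ` A) = ennreal (\<Delta> x) * emeasure \<mu> A)"

definition hnorm :: "('h \<Rightarrow> 'h \<Rightarrow> complex) \<Rightarrow> 'h \<Rightarrow> real" where
  "hnorm ip v = sqrt (Re (ip v v))"

definition hilbert_space :: "(complex \<Rightarrow> 'h::ab_group_add \<Rightarrow> 'h) \<Rightarrow> ('h \<Rightarrow> 'h \<Rightarrow> complex) \<Rightarrow> bool" where
  "hilbert_space smul ip \<longleftrightarrow>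
     (\<forall>a b v. smul a (smul b v) = smul (a * b) v) \<and> (\<forall>v. smul 1 v = v) \<and>
     (\<forall>a v w. smul a (v + w) = smul a v + smul a w) \<and>
     (\<forall>a b v. smul (a + b) v = smul a v + smul b v) \<and>
     (\<forall>u v w. ip (u + v) w = ip u w + ip v w) \<and>
     (\<forall>a v w. ip (smul a v) w = a * ip v w) \<and>
     (\<forall>v w. ip w v = cnj (ip v w)) \<and>
     (\<forall>v. 0 \<le> Re (ip v v)) \<and> (\<forall>v. ip v v = 0 \<longrightarrow> v = 0) \<and>
     (\<forall>s :: nat \<Rightarrow> 'h. (\<forall>\<epsilon>>0. \<exists>N. \<forall>j\<ge>N. \<forall>k\<ge>N. hnorm ip (s j - s k) < \<epsilon>) \<longrightarrow>
         (\<exists>l. \<forall>\<epsilon>>0. \<exists>N. \<forall>n\<ge>N. hnorm ip (s n - l) < \<epsilon>)) \<and>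
     (\<exists>D. countable D \<and> (\<forall>v \<epsilon>. \<epsilon> > 0 \<longrightarrow> (\<exists>d\<in>D. hnorm ip (v - d) < \<epsilon>)))"

definition unitary_rep ::
  "(complex \<Rightarrow> 'h::ab_group_add \<Rightarrow> 'h) \<Rightarrow> ('h \<Rightarrow> 'h \<Rightarrow> complex) \<Rightarrow>
   ('g::{group_add,topological_space} \<Rightarrow> 'h \<Rightarrow> 'h) \<Rightarrow> bool" where
  "unitary_rep smul ip \<pi> \<longleftrightarrow>
     (\<forall>x a v w. \<pi> x (smul a v + w) = smul a (\<pi> x v) + \<pi> x w) \<and>
     (\<forall>x v w. ip (\<pi> x v) (\<pi> x w) = ip v w) \<and>
     (\<forall>x. surj (\<pi> x)) \<and>
     (\<forall>x y. \<pi> (x + y) = \<pi> x \<circ> \<pi> y) \<and> (\<forall>v. \<pi> 0 v = v) \<and>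
     (\<forall>v x0 \<epsilon>. \<epsilon> > 0 \<longrightarrow>
        (\<exists>N. open N \<and> x0 \<in> N \<and> (\<forall>x\<in>N. hnorm ip (\<pi> x v - \<pi> x0 v) < \<epsilon>)))"

definition admissible ::
  "'g measure \<Rightarrow> ('h \<Rightarrow> 'h \<Rightarrow> complex) \<Rightarrow> ('g \<Rightarrow> 'h \<Rightarrow> 'h) \<Rightarrow> 'h \<Rightarrow> bool" where
  "admissible \<mu> ip \<pi> u \<longleftrightarrow>
     (\<forall>v. (\<lambda>x. ip v (\<pi> x u)) \<in> borel_measurable \<mu> \<and>
          integrable \<mu> (\<lambda>x. (cmod (ip v (\<pi> x u)))\<^sup>2) \<and>
          (\<integral>x. (cmod (ip v (\<pi> x u)))\<^sup>2 \<partial>\<mu>) = (hnorm ip v)\<^sup>2)"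

text \<open>Weighted Lebesgue spaces (functions, not classes) and their norms.\<close>
definition Lpv :: "'g measure \<Rightarrow> real \<Rightarrow> ('g \<Rightarrow> real) \<Rightarrow> ('g \<Rightarrow> complex) set" where
  "Lpv \<mu> p v = {f. f \<in> borel_measurable \<mu> \<and> integrable \<mu> (\<lambda>x. (v x * cmod (f x)) powr p)}"

definition Lpv_norm :: "'g measure \<Rightarrow> real \<Rightarrow> ('g \<Rightarrow> real) \<Rightarrow> ('g \<Rightarrow> complex) \<Rightarrow> real" where
  "Lpv_norm \<mu> p v f = (\<integral>x. (v x * cmod (f x)) powr p \<partial>\<mu>) powr (1 / p)"

definition ell_space :: "'i set \<Rightarrow> real \<Rightarrow> ('i \<Rightarrow> real) \<Rightarrow> ('i \<Rightarrow> complex) set" where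
  "ell_space I r \<theta> = {c. (\<lambda>i. (\<theta> i * cmod (c i)) powr r) summable_on I}"

definition ell_norm :: "'i set \<Rightarrow> real \<Rightarrow> ('i \<Rightarrow> real) \<Rightarrow> ('i \<Rightarrow> complex) \<Rightarrow> real" where
  "ell_norm I r \<theta> c = (\<Sum>\<^sub>\<infinity>i\<in>I. (\<theta> i * cmod (c i)) powr r) powr (1 / r)"

definition conv :: "'g::group_add measure \<Rightarrow> ('g \<Rightarrow> complex) \<Rightarrow> ('g \<Rightarrow> complex) \<Rightarrow> 'g \<Rightarrow> complex" where
  "conv \<mu> f g x = (\<integral>y. f y * g (- y + x) \<partial>\<mu>)"

definition conv_bounded :: "'g::group_add measure \<Rightarrow> real \<Rightarrow> ('g \<Rightarrow> real) \<Rightarrow> ('g \<Rightarrow> complex) \<Rightarrow> bool" where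
  "conv_bounded \<mu> r m K \<longleftrightarrow>
     (\<forall>f \<in> Lpv \<mu> r m. (AE x in \<mu>. integrable \<mu> (\<lambda>y. f y * K (- y + x))) \<and>
                     conv \<mu> f K \<in> Lpv \<mu> r m) \<and>
     (\<exists>C. \<forall>f \<in> Lpv \<mu> r m. Lpv_norm \<mu> r m (conv \<mu> f K) \<le> C * Lpv_norm \<mu> r m f)"

definition sym_submult_weight :: "('g::{group_add,topological_space} \<Rightarrow> real) \<Rightarrow> bool" where
  "sym_submult_weight w \<longleftrightarrow> continuous_on UNIV w \<and> (\<forall>x. w x > 0) \<and>
     (\<forall>x y. w (x + y) \<le> w x * w y) \<and> (\<forall>x. w x = w (- x))"

definition moderate :: "('g::{group_add,topological_space} \<Rightarrow> real) \<Rightarrow> ('g \<Rightarrow> real) \<Rightarrow> bool" where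
  "moderate w m \<longleftrightarrow> continuous_on UNIV m \<and> (\<forall>x. m x > 0) \<and>
     (\<forall>x y. m (x + y) \<le> w x * m y \<and> m (x + y) \<le> m x * w y)"

definition unit_nbhd :: "'g::{group_add,topological_space} set \<Rightarrow> bool" where
  "unit_nbhd Q \<longleftrightarrow> compact Q \<and> 0 \<in> interior Q"

definition locmax :: "'g::group_add measure \<Rightarrow> 'g set \<Rightarrow> ('g \<Rightarrow> complex) \<Rightarrow> 'g \<Rightarrow> real" where
  "locmax \<mu> Q W x =
     real_of_ereal (esssup \<mu> (\<lambda>y. ereal (indicator ((\<lambda>q. q + x) ` Q) y * cmod (W y))))"

definition rel_separated :: "'i set \<Rightarrow> ('i \<Rightarrow> 'g::{group_add,topological_space}) \<Rightarrow> bool" where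
  "rel_separated I x \<longleftrightarrow>
     (\<forall>Q'. unit_nbhd Q' \<longrightarrow> (\<exists>N::nat. \<forall>y.
        finite {i\<in>I. y \<in> (\<lambda>q. x i + q) ` Q'} \<and> card {i\<in>I. y \<in> (\<lambda>q. x i + q) ` Q'} \<le> N))"

definition BUPU :: "'g::{group_add,topological_space} set \<Rightarrow> 'i set \<Rightarrow> ('i \<Rightarrow> 'g) \<Rightarrow> ('i \<Rightarrow> 'g \<Rightarrow> real) \<Rightarrow> bool" where
  "BUPU U I x \<psi> \<longleftrightarrow> rel_separated I x \<and>
     (\<forall>i\<in>I. \<psi> i \<in> borel_measurable borel \<and> (\<forall>y. 0 \<le> \<psi> i y \<and> \<psi> i y \<le> 1) \<and>
            (\<forall>y. y \<notin> (\<lambda>q. x i + q) ` U \<longrightarrow> \<psi> i y = 0)) \<and>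
     (\<forall>y. ((\<lambda>i. \<psi> i y) has_sum 1) I)"

end

theory Submission
  imports Defs
begin

locale hgrp =
  fixes \<mu> :: "'g::{group_add,t2_space,second_countable_topology} measure" and \<Delta> :: "'g \<Rightarrow> real"
  assumes G: "lc_haar_group \<mu> \<Delta>"
begin

lemma sets_mu: "sets \<mu> = sets borel" using G unfolding lc_haar_group_def by (elim conjE)
lemma space_mu: "space \<mu> = UNIV" using sets_eq_imp_space_eq[OF sets_mu] by simp
lemma meas_mu: "measurable \<mu> N = measurable borel N" by (rule measurable_cong_sets[OF sets_mu refl])
lemma sets_mu_iff[simp]: "A \<in> sets \<mu> \<longleftrightarrow> A \<in> sets borel" by (simp add: sets_mu)

lemma cont_add: "continuous_on UNIV (\<lambda>p::'g \<times> 'g. fst p + snd p)" using G unfolding lc_haar_group_def by (elim conjE) simp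
lemma cont_uminus: "continuous_on UNIV (uminus :: 'g \<Rightarrow> 'g)" using G unfolding lc_haar_group_def by (elim conjE) simp

lemma cont_add2:
  assumes "continuous_on S f" "continuous_on S g"
  shows "continuous_on S (\<lambda>y. f y + (g y :: 'g))"
proof -
  have "continuous_on S ((\<lambda>p::'g \<times> 'g. fst p + snd p) \<circ> (\<lambda>y. (f y, g y)))"
    by (rule continuous_on_compose) (auto intro!: continuous_on_Pair assms continuous_on_subset[OF cont_add])
  then show ?thesis by (simp add: o_def)
qed

lemma cont_minus2:
  assumes "continuous_on S f"
  shows "continuous_on S (\<lambda>y. - (f y :: 'g))"
proof -
  have "continuous_on S (uminus \<circ> f)"
    by (rule continuous_on_compose) (auto intro!: assms continuous_on_subset[OF cont_uminus])
  then show ?thesis by (simp add: o_def)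
qed

lemma cont_ladd: "continuous_on S (\<lambda>y. a + (y::'g))"
  by (intro cont_add2 continuous_on_const continuous_on_id)
lemma cont_radd: "continuous_on S (\<lambda>y. (y::'g) + a)"
  by (intro cont_add2 continuous_on_const continuous_on_id)

lemma radd_image: "(\<lambda>q. q + a) ` V = (\<lambda>y. y + (-a::'g)) -` V"
proof (intro set_eqI iffI)
  fix x assume "x \<in> (\<lambda>y. y + (-a::'g)) -` V"
  then have "x + - a \<in> V" by simp
  then show "x \<in> (\<lambda>q. q + a) ` V" by (rule image_eqI[rotated]) (simp add: add.assoc)
qed (auto simp: add.assoc)
lemma ladd_image: "(\<lambda>q. a + q) ` V = (\<lambda>y. (-a::'g) + y) -` V"
proof (intro set_eqI iffI)
  fix x assume "x \<in> (\<lambda>y. (-a::'g) + y) -` V"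
  then have "- a + x \<in> V" by simp
  then show "x \<in> (\<lambda>q. a + q) ` V" by (rule image_eqI[rotated]) (simp add: add.assoc[symmetric])
qed (auto simp: add.assoc[symmetric])
lemma uminus_image: "uminus ` V = (uminus::'g\<Rightarrow>'g) -` V"
proof (intro set_eqI iffI)
  fix x assume "x \<in> (uminus::'g\<Rightarrow>'g) -` V"
  then have "- x \<in> V" by simp
  then show "x \<in> uminus ` V" by (rule image_eqI[rotated]) simp
qed auto

lemma open_radd: "open V \<Longrightarrow> open ((\<lambda>q. q + (a::'g)) ` V)"
  unfolding radd_image by (rule open_vimage[OF _ cont_radd])
lemma open_ladd: "open V \<Longrightarrow> open ((\<lambda>q. (a::'g) + q) ` V)"
  unfolding ladd_image by (rule open_vimage[OF _ cont_ladd])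
lemma open_uminus: "open V \<Longrightarrow> open (uminus ` (V::'g set))"
  unfolding uminus_image by (rule open_vimage[OF _ cont_uminus])

lemma compact_radd: "compact V \<Longrightarrow> compact ((\<lambda>q. q + (a::'g)) ` V)"
  by (rule compact_continuous_image[OF continuous_on_subset[OF cont_radd]]) auto
lemma compact_ladd: "compact V \<Longrightarrow> compact ((\<lambda>q. (a::'g) + q) ` V)"
  by (rule compact_continuous_image[OF continuous_on_subset[OF cont_ladd]]) auto

lemma emeasure_ladd: "A \<in> sets borel \<Longrightarrow> emeasure \<mu> ((\<lambda>y. x + y) ` A) = emeasure \<mu> A"
  using G unfolding lc_haar_group_def by (elim conjE) simp
lemma emeasure_radd: "A \<in> sets borel \<Longrightarrow> emeasure \<mu> ((\<lambda>y. y + x) ` A) = ennreal (\<Delta> x) * emeasure \<mu> A"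
  using G unfolding lc_haar_group_def by (elim conjE) simp
lemma emeasure_compact: "compact C \<Longrightarrow> emeasure \<mu> C < \<infinity>"
  using G unfolding lc_haar_group_def by (elim conjE) simp
lemma emeasure_open: "open V \<Longrightarrow> V \<noteq> {} \<Longrightarrow> emeasure \<mu> V > 0"
  using G unfolding lc_haar_group_def by (elim conjE) simp
lemma Delta_pos: "\<Delta> x > 0"
  using G unfolding lc_haar_group_def by (elim conjE) simp

lemma distr_ladd: "distr \<mu> \<mu> (\<lambda>y. a + y) = \<mu>"
proof (rule measure_eqI)
  show "sets (distr \<mu> \<mu> (\<lambda>y. a + y)) = sets \<mu>" by simp
  have m: "(\<lambda>y. a + y) \<in> measurable \<mu> \<mu>"
    unfolding measurable_cong_sets[OF sets_mu sets_mu] by (rule borel_measurable_continuous_onI[OF cont_ladd])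
  fix A assume A: "A \<in> sets (distr \<mu> \<mu> (\<lambda>y. a + y))"
  then have A': "A \<in> sets borel" by simp
  have "emeasure (distr \<mu> \<mu> (\<lambda>y. a + y)) A = emeasure \<mu> ((\<lambda>y. a + y) -` A)"
    using A by (subst emeasure_distr[OF m]) (simp_all add: space_mu)
  also have "(\<lambda>y. a + y) -` A = (\<lambda>y. -a + y) ` A"
    using ladd_image[of "-a" A] by simp
  also have "emeasure \<mu> \<dots> = emeasure \<mu> A" by (rule emeasure_ladd[OF A'])
  finally show "emeasure (distr \<mu> \<mu> (\<lambda>y. a + y)) A = emeasure \<mu> A" .
qed

lemma nn_integral_ladd:
  assumes "h \<in> borel_measurable borel"
  shows "(\<integral>\<^sup>+y. h (a + y) \<partial>\<mu>) = (\<integral>\<^sup>+y. h y \<partial>\<mu>)"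
proof -
  have m: "(\<lambda>y. a + y) \<in> measurable \<mu> \<mu>"
    unfolding measurable_cong_sets[OF sets_mu sets_mu] by (rule borel_measurable_continuous_onI[OF cont_ladd])
  have h: "h \<in> borel_measurable \<mu>"
    using assms by (simp only: meas_mu)
  have "(\<integral>\<^sup>+y. h y \<partial>distr \<mu> \<mu> (\<lambda>y. a + y)) = (\<integral>\<^sup>+y. h (a + y) \<partial>\<mu>)"
    by (rule nn_integral_distr[OF m]) (unfold measurable_cong_sets[OF sets_distr refl], rule h)
  then show ?thesis by (simp add: distr_ladd)
qed

end

context hgrp begin

lemma radd_borel: "A \<in> sets borel \<Longrightarrow> (\<lambda>y. y + (a::'g)) ` A \<in> sets borel"
proof -
  assume A: "A \<in> sets borel"
  have "(\<lambda>y. y + (-a)) -` A \<inter> space borel \<in> sets borel"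
    by (rule measurable_sets[OF borel_measurable_continuous_onI[OF cont_radd] A])
  then show ?thesis by (simp add: radd_image)
qed

lemma radd_image_image: "(\<lambda>y. y + b) ` ((\<lambda>y. y + a) ` A) = (\<lambda>y. y + (a + b::'g)) ` A"
  by (simp add: image_image add.assoc)

lemma Delta_mult:
  assumes A: "A \<in> sets borel" "0 < emeasure \<mu> A" "emeasure \<mu> A < \<infinity>"
  shows "\<Delta> (a + b) = \<Delta> a * \<Delta> b"
proof -
  have "ennreal (\<Delta> (a + b)) * emeasure \<mu> A = emeasure \<mu> ((\<lambda>y. y + (a + b)) ` A)"
    by (rule emeasure_radd[OF A(1), symmetric])
  also have "\<dots> = emeasure \<mu> ((\<lambda>y. y + b) ` ((\<lambda>y. y + a) ` A))" by (simp add: radd_image_image)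
  also have "\<dots> = ennreal (\<Delta> b) * (ennreal (\<Delta> a) * emeasure \<mu> A)"
    by (simp add: emeasure_radd radd_borel A(1))
  finally have e: "ennreal (\<Delta> (a + b)) * emeasure \<mu> A = ennreal (\<Delta> b) * (ennreal (\<Delta> a) * emeasure \<mu> A)" .
  have mA1: "emeasure \<mu> A = ennreal (measure \<mu> A)"
    by (rule emeasure_eq_ennreal_measure) (use A in auto)
  have mA: "emeasure \<mu> A = ennreal (measure \<mu> A)" "measure \<mu> A > 0"
    using mA1 A(2) by auto
  have "ennreal (\<Delta> (a + b) * measure \<mu> A) = ennreal (\<Delta> (a+b)) * ennreal (measure \<mu> A)"
    using Delta_pos[of "a+b"] mA(2) by (intro ennreal_mult) auto
  also have "\<dots> = ennreal (\<Delta> b) * (ennreal (\<Delta> a) * ennreal (measure \<mu> A))" using e mA(1) by simp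
  also have "\<dots> = ennreal (\<Delta> b * \<Delta> a * measure \<mu> A)"
    using Delta_pos[of a] Delta_pos[of b] mA(2) by (simp add: ennreal_mult mult.assoc)
  finally have "ennreal (\<Delta> (a + b) * measure \<mu> A) = ennreal (\<Delta> b * \<Delta> a * measure \<mu> A)" .
  then have "\<Delta> (a + b) * measure \<mu> A = \<Delta> b * \<Delta> a * measure \<mu> A"
    using Delta_pos[of "a+b"] Delta_pos[of a] Delta_pos[of b] mA(2)
    by (subst (asm) ennreal_inj) (auto intro!: mult_nonneg_nonneg)
  then show ?thesis using mA(2) by simp
qed

lemma locmax_ge:
  assumes Q: "compact Q" and W: "continuous_on UNIV W"
    and z: "z \<in> (\<lambda>q. q + z') ` interior Q"
  shows "cmod (W z) \<le> locmax \<mu> Q W z'"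
proof -
  define K where "K = (\<lambda>q. q + z') ` Q"
  have Kc: "compact K" unfolding K_def by (rule compact_radd[OF Q])
  then have Kb: "K \<in> sets borel" by (simp add: borel_closed compact_imp_closed)
  define g where "g = (\<lambda>y. ereal (indicator K y * cmod (W y)))"
  have Wm[measurable]: "W \<in> borel_measurable borel" by (rule borel_measurable_continuous_onI[OF W])
  have gm: "g \<in> borel_measurable \<mu>" unfolding meas_mu g_def using Kb by measurable
  have "compact (W ` K)" by (rule compact_continuous_image[OF continuous_on_subset[OF W] Kc]) auto
  then obtain B0 where B0: "\<And>y. y \<in> K \<Longrightarrow> cmod (W y) \<le> B0"
    by (meson bounded_iff compact_imp_bounded image_eqI)
  define B where "B = max B0 0"
  have B: "\<And>y. y \<in> K \<Longrightarrow> cmod (W y) \<le> B" "B \<ge> 0" unfolding B_def using B0 by force+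
  have gB: "\<And>y. g y \<le> ereal B"
    unfolding g_def using B by (auto simp: indicator_def)
  define e where "e = esssup \<mu> g"
  have eB: "e \<le> ereal B" unfolding e_def by (rule esssup_I[OF gm]) (use gB in auto)
  have lm: "locmax \<mu> Q W z' = real_of_ereal e"
    unfolding locmax_def e_def g_def K_def ..
  show ?thesis
  proof (rule ccontr)
    assume "\<not> ?thesis"
    then have lt: "real_of_ereal e < cmod (W z)" using lm by simp
    define Ob where "Ob = (\<lambda>q. q + z') ` interior Q \<inter> {y. real_of_ereal e < cmod (W y)}"
    have "open {y. real_of_ereal e < cmod (W y)}"
      using continuous_on_norm[OF W] by (simp add: open_Collect_less continuous_on_const)
    then have Obo: "open Ob" unfolding Ob_def by (intro open_Int open_radd) auto
    have zOb: "z \<in> Ob" unfolding Ob_def using z lt by auto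
    have pos: "emeasure \<mu> Ob > 0" using emeasure_open[OF Obo] zOb by auto
    have ObK: "Ob \<subseteq> K" unfolding Ob_def K_def using interior_subset by auto
    have ngt: "\<not> g y \<le> e" if "y \<in> Ob" for y
    proof -
      have yK: "y \<in> K" using ObK that by auto
      have gy: "g y = ereal (cmod (W y))" unfolding g_def using yK by simp
      have ylt: "real_of_ereal e < cmod (W y)" using that unfolding Ob_def by simp
      show ?thesis
      proof (cases e)
        case (real t) then show ?thesis using gy ylt by simp
      next
        case PInf then show ?thesis using eB by simp
      next
        case MInf then show ?thesis using gy by simp
      qed
    qed
    have "AE y in \<mu>. g y \<le> e" unfolding e_def by (rule esssup_AE)
    then have "AE y in \<mu>. y \<notin> Ob" by eventually_elim (use ngt in blast)
    moreover have "Ob \<in> sets \<mu>" using Obo by simp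
    ultimately have "emeasure \<mu> Ob = 0"
      by (subst (asm) AE_iff_measurable[OF _ refl]) (auto simp: space_mu)
    then show False using pos by simp
  qed
qed

end

lemma young_lin:
  fixes a l r :: real
  assumes a: "a \<ge> 0" and l: "l > 0" and r: "r \<ge> 1"
  shows "a \<le> l + l powr (1 - r) * a powr r"
proof (cases "a \<le> l")
  case True
  have "0 \<le> l powr (1 - r) * a powr r" by simp
  then show ?thesis using True by linarith
next
  case False
  then have al: "a > l" by simp
  have "a powr r = a * a powr (r - 1)"
    using al l by (simp add: powr_diff)
  moreover have "l powr (r - 1) \<le> a powr (r - 1)"
    using al l r by (intro powr_mono2) auto
  moreover have "l powr (1 - r) * l powr (r - 1) = 1"
    using l by (simp add: powr_add[symmetric])
  ultimately have "a \<le> l powr (1 - r) * a powr r"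
  proof -
    assume e: "a powr r = a * a powr (r - 1)" and m: "l powr (r - 1) \<le> a powr (r - 1)"
      and o: "l powr (1 - r) * l powr (r - 1) = 1"
    have "a = a * (l powr (1 - r) * l powr (r - 1))" using o by simp
    also have "\<dots> \<le> a * (l powr (1 - r) * a powr (r - 1))"
      using m a by (intro mult_left_mono) auto
    also have "\<dots> = l powr (1 - r) * a powr r" using e by simp
    finally show ?thesis .
  qed
  then show ?thesis using l by (smt (verit) powr_ge_zero)
qed

lemma opt_lambda:
  fixes t M A r :: real
  assumes t: "t \<ge> 0" and M: "M > 0" and A: "A \<ge> 0" and r: "r > 1"
    and H: "\<And>l. l > 0 \<Longrightarrow> t \<le> l * M + l powr (1 - r) * A"
  shows "t powr r \<le> 2 powr r * M powr (r - 1) * A"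
proof (cases "t = 0")
  case True then show ?thesis using A by simp
next
  case False
  then have tp: "t > 0" using t by simp
  define l where "l = t / (2 * M)"
  have lp: "l > 0" unfolding l_def using tp M by simp
  have lM: "l * M = t / 2" unfolding l_def using M by simp
  have "t \<le> t / 2 + l powr (1 - r) * A" using H[OF lp] lM by simp
  then have h1: "t / 2 \<le> l powr (1 - r) * A" by simp
  have "l powr (1 - r) * l powr (r - 1) = 1" using lp by (simp add: powr_add[symmetric])
  then have h2: "t / 2 * l powr (r - 1) \<le> A"
    using mult_right_mono[OF h1, of "l powr (r - 1)"] by (simp add: mult.commute mult.left_commute)
  have tl: "t = (2 * M) * l" unfolding l_def using M by simp
  have "t powr r = t * t powr (r - 1)" using tp by (simp add: powr_diff)
  also have "\<dots> = (2 * M) * l * (((2 * M) * l) powr (r - 1))" using tl by simp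
  also have "\<dots> = (2 * M) * l * ((2 * M) powr (r - 1) * l powr (r - 1))" using M lp by (simp add: powr_mult)
  also have "(2 * M) * l * ((2 * M) powr (r - 1) * l powr (r - 1)) = 2 * (2 * M) powr (r - 1) * (t / 2 * l powr (r - 1))"
    unfolding l_def using M by (simp add: field_simps)
  also have "\<dots> \<le> 2 * (2 * M) powr (r - 1) * A"
    using h2 by (intro mult_left_mono) auto
  also have "2 * (2 * M) powr (r - 1) = 2 powr r * M powr (r - 1)"
    using M by (simp add: powr_mult powr_diff)
  finally show ?thesis .
qed

lemma finite_holder:
  fixes a F :: "'i \<Rightarrow> real"
  assumes E: "finite E" and a: "\<And>i. i \<in> E \<Longrightarrow> a i \<ge> 0" and F: "\<And>i. i \<in> E \<Longrightarrow> F i \<ge> 0"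
    and B: "sum F E \<le> B" "B > 0" and r: "r > 1"
  shows "(\<Sum>i\<in>E. a i * F i) powr r \<le> 2 powr r * B powr (r - 1) * (\<Sum>i\<in>E. a i powr r * F i)"
proof (rule opt_lambda[OF _ B(2) _ r])
  show "0 \<le> (\<Sum>i\<in>E. a i * F i)" using a F by (intro sum_nonneg) auto
  show "0 \<le> (\<Sum>i\<in>E. a i powr r * F i)" using F by (intro sum_nonneg) auto
  fix l :: real assume l: "l > 0"
  have "(\<Sum>i\<in>E. a i * F i) \<le> (\<Sum>i\<in>E. (l + l powr (1 - r) * a i powr r) * F i)"
    using young_lin[OF a l] r F by (intro sum_mono mult_right_mono) auto
  also have "\<dots> = l * sum F E + l powr (1 - r) * (\<Sum>i\<in>E. a i powr r * F i)"
    by (simp add: algebra_simps sum.distrib sum_distrib_left)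
  also have "\<dots> \<le> l * B + l powr (1 - r) * (\<Sum>i\<in>E. a i powr r * F i)"
    using B l by simp
  finally show "(\<Sum>i\<in>E. a i * F i) \<le> l * B + l powr (1 - r) * (\<Sum>i\<in>E. a i powr r * F i)" .
qed

context hgrp begin

lemma compact_bound:
  assumes "compact K" "continuous_on UNIV (h :: 'g \<Rightarrow> real)"
  obtains C where "C > 0" "\<And>y. y \<in> K \<Longrightarrow> h y \<le> C"
proof -
  have "compact (h ` K)" by (rule compact_continuous_image[OF continuous_on_subset[OF assms(2)] assms(1)]) auto
  then have "bounded (h ` K)" by (rule compact_imp_bounded)
  then obtain B where B0: "\<And>z. z \<in> h ` K \<Longrightarrow> norm z \<le> B" unfolding bounded_iff by blast
  have B: "h y \<le> B" if "y \<in> K" for y using B0[of "h y"] that by auto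
  show ?thesis by (rule that[of "max B 1"]) (use B in force)+
qed

lemma unit_nbhd_pos:
  assumes "unit_nbhd U"
  shows "0 < emeasure \<mu> U" "emeasure \<mu> U < \<infinity>" "U \<in> sets borel"
proof -
  have "0 < emeasure \<mu> (interior U)" using assms unfolding unit_nbhd_def
    by (intro emeasure_open) auto
  also have "\<dots> \<le> emeasure \<mu> U" using assms unfolding unit_nbhd_def
    by (intro emeasure_mono interior_subset) (auto simp: borel_closed compact_imp_closed)
  finally show "0 < emeasure \<mu> U" .
  show "emeasure \<mu> U < \<infinity>" using assms unfolding unit_nbhd_def by (intro emeasure_compact) auto
  show "U \<in> sets borel" using assms unfolding unit_nbhd_def by (auto simp: borel_closed compact_imp_closed)
qed

lemma card_bound_sum_indicator:
  assumes F: "finite F" "F \<subseteq> I" and fin: "finite {i\<in>I. y \<in> E i}" and c: "card {i\<in>I. y \<in> E i} \<le> N"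
  shows "(\<Sum>i\<in>F. indicator (E i) y :: real) \<le> N"
proof -
  have "(\<Sum>i\<in>F. indicator (E i) y :: real) = real (card {i\<in>F. y \<in> E i})"
    using F(1) by (simp add: indicator_def Int_def conj_commute)
  also have "card {i\<in>F. y \<in> E i} \<le> card {i\<in>I. y \<in> E i}"
    using F fin by (intro card_mono) auto
  finally show ?thesis using c by linarith
qed

lemma analysis_part:
  fixes w m :: "'g \<Rightarrow> real" and x :: "'i \<Rightarrow> 'g"
  assumes w: "sym_submult_weight w" and m: "moderate w m" and r: "r > 1"
    and U: "unit_nbhd U" and BU: "BUPU U I x \<psi>"
  shows "(\<forall>f \<in> Lpv \<mu> r m.
           (\<forall>i\<in>I. integrable \<mu> (\<lambda>y. f y * cnj (complex_of_real (\<psi> i y)))) \<and>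
           (\<lambda>i. \<integral>y. f y * cnj (complex_of_real (\<psi> i y)) \<partial>\<mu>) \<in> ell_space I r (\<lambda>i. m (x i))) \<and>
        (\<exists>C. \<forall>f \<in> Lpv \<mu> r m.
           ell_norm I r (\<lambda>i. m (x i)) (\<lambda>i. \<integral>y. f y * cnj (complex_of_real (\<psi> i y)) \<partial>\<mu>)
             \<le> C * Lpv_norm \<mu> r m f)"
proof -
  define E where "E i = (\<lambda>q. x i + q) ` U" for i
  have wc: "continuous_on UNIV w" and wpos: "\<And>y. w y > 0" and wsym: "\<And>y. w y = w (- y)"
    using w unfolding sym_submult_weight_def by auto
  have mc: "continuous_on UNIV m" and mpos: "\<And>y. m y > 0"
    and mmod: "\<And>a b. m (a + b) \<le> m a * w b"
    using m unfolding moderate_def by auto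
  obtain Cu where Cu: "Cu > 0" "\<And>u. u \<in> U \<Longrightarrow> w u \<le> Cu"
    using compact_bound[OF _ wc] U unfolding unit_nbhd_def by blast
  have rs: "rel_separated I x" and psim: "\<And>i. i \<in> I \<Longrightarrow> \<psi> i \<in> borel_measurable borel"
    and psi01: "\<And>i y. i \<in> I \<Longrightarrow> 0 \<le> \<psi> i y \<and> \<psi> i y \<le> 1"
    and psi0: "\<And>i y. i \<in> I \<Longrightarrow> y \<notin> E i \<Longrightarrow> \<psi> i y = 0"
    using BU unfolding BUPU_def E_def by auto
  obtain N :: nat where N: "\<And>y. finite {i\<in>I. y \<in> E i}" "\<And>y. card {i\<in>I. y \<in> E i} \<le> N"
    using rs U unfolding rel_separated_def E_def by blast
  have Eb: "E i \<in> sets borel" for i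
    using U unfolding E_def unit_nbhd_def by (auto intro!: borel_closed compact_imp_closed compact_ladd)
  have Emeas: "emeasure \<mu> (E i) = emeasure \<mu> U" for i
    unfolding E_def by (rule emeasure_ladd) (rule unit_nbhd_pos(3)[OF U])
  define M where "M = measure \<mu> U"
  have MU: "emeasure \<mu> U = ennreal M" unfolding M_def
    by (rule emeasure_eq_ennreal_measure) (use unit_nbhd_pos(2)[OF U] in auto)
  have Mpos: "M > 0" using unit_nbhd_pos(1)[OF U] MU by simp
  have EM: "measure \<mu> (E i) = M" for i unfolding M_def measure_def Emeas ..
  have Efin: "emeasure \<mu> (E i) < \<infinity>" for i using Emeas[of i] MU by simp
  have mbound: "m (x i) \<le> m y * Cu" if yE: "y \<in> E i" for i y
  proof -
    obtain u where u: "u \<in> U" "y = x i + u" using yE unfolding E_def by auto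
    have "x i = y + (- u)" using u by (simp add: add.assoc)
    then have "m (x i) \<le> m y * w (- u)" using mmod by metis
    also have "w (- u) = w u" using wsym[of u] by simp
    also have "m y * w u \<le> m y * Cu" using Cu u mpos[of y] by (intro mult_left_mono) auto
    finally show ?thesis .
  qed
  define K where "K = Cu powr r * (2 powr r * M powr (r - 1)) * real N"
  have Kpos: "K \<ge> 0" unfolding K_def by simp
  have main: "(\<forall>i\<in>I. integrable \<mu> (\<lambda>y. f y * cnj (complex_of_real (\<psi> i y)))) \<and>
      (\<lambda>i. \<integral>y. f y * cnj (complex_of_real (\<psi> i y)) \<partial>\<mu>) \<in> ell_space I r (\<lambda>i. m (x i)) \<and>
      ell_norm I r (\<lambda>i. m (x i)) (\<lambda>i. \<integral>y. f y * cnj (complex_of_real (\<psi> i y)) \<partial>\<mu>)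
             \<le> K powr (1 / r) * Lpv_norm \<mu> r m f" if f: "f \<in> Lpv \<mu> r m" for f
  proof -
    have fm: "f \<in> borel_measurable borel" and gi: "integrable \<mu> (\<lambda>y. (m y * cmod (f y)) powr r)"
      using f unfolding Lpv_def by (auto simp: meas_mu)
    have mm[measurable]: "m \<in> borel_measurable borel" by (rule borel_measurable_continuous_onI[OF mc])
    note fm[measurable]
    define g where "g y = m y * cmod (f y)" for y
    have gnn: "g y \<ge> 0" for y unfolding g_def using mpos[of y] by simp
    have gm[measurable]: "g \<in> borel_measurable borel" unfolding g_def by measurable
    have gri: "integrable \<mu> (\<lambda>y. g y powr r)" using gi unfolding g_def .
    define c where "c i = (\<integral>y. f y * cnj (complex_of_real (\<psi> i y)) \<partial>\<mu>)" for i
    define A where "A i = (\<integral>y. indicator (E i) y * g y powr r \<partial>\<mu>)" for i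
    define t where "t i = (\<integral>y. indicator (E i) y * g y \<partial>\<mu>)" for i
    have iA: "integrable \<mu> (\<lambda>y. indicator (E i) y * g y powr r)" for i
      using integrable_real_mult_indicator[OF _ gri, of "E i"] Eb[of i] by (simp add: mult.commute)
    have iE: "integrable \<mu> (indicator (E i) :: 'g \<Rightarrow> real)" for i
      using Eb[of i] Efin[of i] by (intro integrable_real_indicator) auto
    have it: "integrable \<mu> (\<lambda>y. indicator (E i) y * g y)" for i
    proof (rule Bochner_Integration.integrable_bound[of _ "\<lambda>y. indicator (E i) y + indicator (E i) y * g y powr r"])
      show "integrable \<mu> (\<lambda>y. indicator (E i) y + indicator (E i) y * g y powr r)"
        using iE iA by auto
      show "(\<lambda>y. indicator (E i) y * g y) \<in> borel_measurable \<mu>" unfolding meas_mu using Eb[of i] by measurable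
      show "AE y in \<mu>. norm (indicator (E i) y * g y) \<le> norm (indicator (E i) y + indicator (E i) y * g y powr r)"
      proof (intro AE_I2)
        fix y
        have "g y \<le> 1 + 1 powr (1 - r) * g y powr r" by (rule young_lin[OF gnn]) (use r in auto)
        then show "norm (indicator (E i) y * g y) \<le> norm (indicator (E i) y + indicator (E i) y * g y powr r)"
          using gnn[of y] by (auto simp: indicator_def)
      qed
    qed
    have ifE: "integrable \<mu> (\<lambda>y. indicator (E i) y * cmod (f y))" if i: "i \<in> I" for i
    proof (rule Bochner_Integration.integrable_bound[of _ "\<lambda>y. (Cu / m (x i)) * (indicator (E i) y * g y)"])
      show "integrable \<mu> (\<lambda>y. (Cu / m (x i)) * (indicator (E i) y * g y))" using it by auto
      show "(\<lambda>y. indicator (E i) y * cmod (f y)) \<in> borel_measurable \<mu>" unfolding meas_mu using Eb[of i] by measurable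
      show "AE y in \<mu>. norm (indicator (E i) y * cmod (f y)) \<le> norm ((Cu / m (x i)) * (indicator (E i) y * g y))"
      proof (intro AE_I2)
        fix y
        show "norm (indicator (E i) y * cmod (f y)) \<le> norm ((Cu / m (x i)) * (indicator (E i) y * g y))"
        proof (cases "y \<in> E i")
          case True
          have "m (x i) * cmod (f y) \<le> m y * Cu * cmod (f y)"
            using mbound[OF True] by (intro mult_right_mono) auto
          then have "cmod (f y) \<le> Cu / m (x i) * g y"
            using mpos[of "x i"] unfolding g_def by (simp add: field_simps)
          then show ?thesis using True gnn[of y] Cu mpos[of "x i"] by simp
        qed simp
      qed
    qed
    have ic: "integrable \<mu> (\<lambda>y. f y * cnj (complex_of_real (\<psi> i y)))" if i: "i \<in> I" for i
    proof (rule Bochner_Integration.integrable_bound[OF ifE[OF i]])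
      note psim[OF i, measurable]
      show "(\<lambda>y. f y * cnj (complex_of_real (\<psi> i y))) \<in> borel_measurable \<mu>" unfolding meas_mu complex_cnj_complex_of_real by measurable
      show "AE y in \<mu>. norm (f y * cnj (complex_of_real (\<psi> i y))) \<le> norm (indicator (E i) y * cmod (f y))"
      proof (intro AE_I2)
        fix y
        show "norm (f y * cnj (complex_of_real (\<psi> i y))) \<le> norm (indicator (E i) y * cmod (f y))"
          using psi01[OF i, of y] psi0[OF i, of y]
          by (cases "y \<in> E i") (auto simp: norm_mult intro!: mult_left_le)
      qed
    qed
    have cb: "m (x i) * cmod (c i) \<le> Cu * t i" if i: "i \<in> I" for i
    proof -
      have "cmod (c i) \<le> (\<integral>y. norm (f y * cnj (complex_of_real (\<psi> i y))) \<partial>\<mu>)"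
        unfolding c_def by (rule integral_norm_bound)
      also have "\<dots> \<le> (\<integral>y. indicator (E i) y * cmod (f y) \<partial>\<mu>)"
      proof (rule integral_mono[OF _ ifE[OF i]])
        show "integrable \<mu> (\<lambda>y. norm (f y * cnj (complex_of_real (\<psi> i y))))" using ic[OF i] by auto
        fix y show "norm (f y * cnj (complex_of_real (\<psi> i y))) \<le> indicator (E i) y * cmod (f y)"
          using psi01[OF i, of y] psi0[OF i, of y]
          by (cases "y \<in> E i") (auto simp: norm_mult intro!: mult_left_le)
      qed
      finally have "m (x i) * cmod (c i) \<le> m (x i) * (\<integral>y. indicator (E i) y * cmod (f y) \<partial>\<mu>)"
        using mpos[of "x i"] by simp
      also have "\<dots> = (\<integral>y. m (x i) * (indicator (E i) y * cmod (f y)) \<partial>\<mu>)" by simp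
      also have "\<dots> \<le> (\<integral>y. Cu * (indicator (E i) y * g y) \<partial>\<mu>)"
      proof (rule integral_mono)
        show "integrable \<mu> (\<lambda>y. m (x i) * (indicator (E i) y * cmod (f y)))" using ifE[OF i] by auto
        show "integrable \<mu> (\<lambda>y. Cu * (indicator (E i) y * g y))" using it by auto
        fix y show "m (x i) * (indicator (E i) y * cmod (f y)) \<le> Cu * (indicator (E i) y * g y)"
        proof (cases "y \<in> E i")
          case True
          have "m (x i) * cmod (f y) \<le> m y * Cu * cmod (f y)"
            using mbound[OF True] by (intro mult_right_mono) auto
          then show ?thesis using True unfolding g_def by (simp add: mult_ac)
        qed simp
      qed
      also have "\<dots> = Cu * t i" unfolding t_def by simp
      finally show ?thesis .
    qed
    have tb: "t i powr r \<le> 2 powr r * M powr (r - 1) * A i" for i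
    proof (rule opt_lambda[OF _ Mpos _ r])
      show "0 \<le> t i" unfolding t_def using gnn by (intro Bochner_Integration.integral_nonneg) auto
      show "0 \<le> A i" unfolding A_def using gnn by (intro Bochner_Integration.integral_nonneg) auto
      fix l :: real assume l: "l > 0"
      have "t i \<le> (\<integral>y. l * indicator (E i) y + l powr (1 - r) * (indicator (E i) y * g y powr r) \<partial>\<mu>)"
        unfolding t_def
      proof (rule integral_mono[OF it])
        show "integrable \<mu> (\<lambda>y. l * indicator (E i) y + l powr (1 - r) * (indicator (E i) y * g y powr r))"
          using iE iA by auto
        fix y
        have "g y \<le> l + l powr (1 - r) * g y powr r" by (rule young_lin[OF gnn l]) (use r in auto)
        then show "indicator (E i) y * g y \<le> l * indicator (E i) y + l powr (1 - r) * (indicator (E i) y * g y powr r)"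
          by (auto simp: indicator_def)
      qed
      also have "\<dots> = l * M + l powr (1 - r) * A i"
        using iE[of i] iA[of i] by (simp add: A_def EM space_mu)
      finally show "t i \<le> l * M + l powr (1 - r) * A i" .
    qed
    define a where "a i = (m (x i) * cmod (c i)) powr r" for i
    have ann: "a i \<ge> 0" for i unfolding a_def by simp
    have ab: "a i \<le> Cu powr r * (2 powr r * M powr (r - 1)) * A i" if i: "i \<in> I" for i
    proof -
      have "a i \<le> (Cu * t i) powr r" unfolding a_def
        using cb[OF i] mpos[of "x i"] by (intro powr_mono2) (use r in auto)
      also have "\<dots> = Cu powr r * t i powr r"
        using Cu(1) by (subst powr_mult) (auto simp: t_def gnn intro!: Bochner_Integration.integral_nonneg)
      also have "\<dots> \<le> Cu powr r * (2 powr r * M powr (r - 1) * A i)"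
        using tb[of i] by (intro mult_left_mono) auto
      finally show ?thesis by (simp add: mult_ac)
    qed
    define Ng where "Ng = (\<integral>y. g y powr r \<partial>\<mu>)"
    have sumA: "(\<Sum>i\<in>F. A i) \<le> real N * Ng" if F: "finite F" "F \<subseteq> I" for F
    proof -
      have "(\<Sum>i\<in>F. A i) = (\<integral>y. (\<Sum>i\<in>F. indicator (E i) y * g y powr r) \<partial>\<mu>)"
        unfolding A_def using iA by (subst Bochner_Integration.integral_sum) auto
      also have "\<dots> \<le> (\<integral>y. real N * g y powr r \<partial>\<mu>)"
      proof (rule integral_mono)
        show "integrable \<mu> (\<lambda>y. \<Sum>i\<in>F. indicator (E i) y * g y powr r)" using iA by auto
        show "integrable \<mu> (\<lambda>y. real N * g y powr r)" using gri by auto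
        fix y
        have "(\<Sum>i\<in>F. indicator (E i) y * g y powr r) = (\<Sum>i\<in>F. indicator (E i) y :: real) * g y powr r"
          by (simp add: sum_distrib_right)
        also have "\<dots> \<le> real N * g y powr r"
          using card_bound_sum_indicator[OF F N(1) N(2)] by (intro mult_right_mono) auto
        finally show "(\<Sum>i\<in>F. indicator (E i) y * g y powr r) \<le> real N * g y powr r" .
      qed
      also have "\<dots> = real N * Ng" unfolding Ng_def by simp
      finally show ?thesis .
    qed
    have suma: "(\<Sum>i\<in>F. a i) \<le> K * Ng" if F: "finite F" "F \<subseteq> I" for F
    proof -
      have "(\<Sum>i\<in>F. a i) \<le> (\<Sum>i\<in>F. Cu powr r * (2 powr r * M powr (r - 1)) * A i)"
        using ab F by (intro sum_mono) auto
      also have "\<dots> = Cu powr r * (2 powr r * M powr (r - 1)) * (\<Sum>i\<in>F. A i)" by (simp add: sum_distrib_left)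
      also have "\<dots> \<le> Cu powr r * (2 powr r * M powr (r - 1)) * (real N * Ng)"
        using sumA[OF F] by (intro mult_left_mono) auto
      finally show ?thesis unfolding K_def by (simp add: mult_ac)
    qed
    have asum: "a summable_on I"
      by (rule nonneg_bdd_above_summable_on) (use ann suma in \<open>auto intro!: bdd_aboveI2\<close>)
    have ainf: "infsum a I \<le> K * Ng"
      by (rule infsum_le_finite_sums[OF asum suma])
    have Ngnn: "Ng \<ge> 0" unfolding Ng_def by (intro Bochner_Integration.integral_nonneg) auto
    have "ell_norm I r (\<lambda>i. m (x i)) c = (infsum a I) powr (1 / r)"
      unfolding ell_norm_def a_def ..
    also have "\<dots> \<le> (K * Ng) powr (1 / r)"
      using ainf r by (intro powr_mono2) (auto intro!: infsum_nonneg ann)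
    also have "\<dots> = K powr (1 / r) * Ng powr (1 / r)" using Kpos Ngnn by (simp add: powr_mult)
    also have "Ng powr (1 / r) = Lpv_norm \<mu> r m f" unfolding Lpv_norm_def Ng_def g_def ..
    finally have nb: "ell_norm I r (\<lambda>i. m (x i)) c \<le> K powr (1 / r) * Lpv_norm \<mu> r m f" .
    have "c \<in> ell_space I r (\<lambda>i. m (x i))" unfolding ell_space_def using asum unfolding a_def by simp
    then show ?thesis using ic nb unfolding c_def by blast
  qed
  show ?thesis using main by blast
qed

end

lemma countable_exhaust:
  assumes "countable J"
  obtains En :: "nat \<Rightarrow> 'i set" where "\<And>n. finite (En n)" "\<And>n. En n \<subseteq> J" "incseq En"
    "\<And>X. finite X \<Longrightarrow> X \<subseteq> J \<Longrightarrow> \<exists>n. X \<subseteq> En n"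
proof (cases "J = {}")
  case True show ?thesis by (rule that[of "\<lambda>_. {}"]) (use True in \<open>auto simp: incseq_def\<close>)
next
  case False
  define e where "e = from_nat_into J"
  have re: "range e = J" using False assms by (simp add: e_def)
  show ?thesis
  proof (rule that[of "\<lambda>n. e ` {..<n}"])
    show "finite (e ` {..<n})" for n by simp
    show "e ` {..<n} \<subseteq> J" for n using re by auto
    show "incseq (\<lambda>n. e ` {..<n})" unfolding incseq_def by (intro allI impI image_mono) auto
    fix X assume X: "finite X" "X \<subseteq> J"
    then have "X \<subseteq> e ` UNIV" using re by simp
    then obtain K where K: "finite K" "X \<subseteq> e ` K" using finite_subset_image[OF X(1)] by blast
    then obtain n where "K \<subseteq> {..<n}" using finite_nat_bounded by blast
    then show "\<exists>n. X \<subseteq> e ` {..<n}" using K by blast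
  qed
qed

lemma exhaust_filterlim:
  assumes "\<And>n. finite (En n)" "\<And>n. En n \<subseteq> J" "incseq En" "\<And>X. finite X \<Longrightarrow> X \<subseteq> J \<Longrightarrow> \<exists>n. X \<subseteq> En n"
  shows "filterlim En (finite_subsets_at_top J) sequentially"
  unfolding filterlim_finite_subsets_at_top
proof (intro allI impI)
  fix X assume "finite X \<and> X \<subseteq> J"
  then obtain n where n: "X \<subseteq> En n" using assms(4) by blast
  have "X \<subseteq> En k" if "k \<ge> n" for k using n assms(3) that unfolding incseq_def by blast
  then show "eventually (\<lambda>y. finite (En y) \<and> X \<subseteq> En y \<and> En y \<subseteq> J) sequentially"
    using assms(1,2) unfolding eventually_sequentially by blast
qed

lemma exhaust_tendsto:
  assumes "\<And>n. finite (En n)" "\<And>n. En n \<subseteq> J" "incseq En" "\<And>X. finite X \<Longrightarrow> X \<subseteq> J \<Longrightarrow> \<exists>n. X \<subseteq> En n"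
    and g: "g summable_on J"
  shows "(\<lambda>n. sum g (En n)) \<longlonglongrightarrow> infsum g J"
proof -
  have "(sum g \<longlongrightarrow> infsum g J) (finite_subsets_at_top J)"
    using has_sum_infsum[OF g] unfolding has_sum_def .
  from filterlim_compose[OF this exhaust_filterlim[OF assms(1-4)]] show ?thesis .
qed

lemma exhaust_summable:
  fixes g :: "'i \<Rightarrow> real"
  assumes "\<And>n. finite (En n)" "\<And>n. En n \<subseteq> J" "incseq En" "\<And>X. finite X \<Longrightarrow> X \<subseteq> J \<Longrightarrow> \<exists>n. X \<subseteq> En n"
    and nn: "\<And>i. g i \<ge> 0" and b: "\<And>n. sum g (En n) \<le> B"
  shows "g summable_on J"
proof (rule nonneg_bdd_above_summable_on)
  show "bdd_above (sum g ` {F. F \<subseteq> J \<and> finite F})"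
  proof (rule bdd_aboveI2)
    fix F assume "F \<in> {F. F \<subseteq> J \<and> finite F}"
    then obtain n where n: "F \<subseteq> En n" using assms(4) by blast
    have "sum g F \<le> sum g (En n)" by (rule sum_mono2[OF assms(1) n]) (use nn in auto)
    then show "sum g F \<le> B" using b[of n] by linarith
  qed
qed (use nn in auto)

context hgrp begin

lemma sup_bound:
  fixes w :: "'g \<Rightarrow> real" and W :: "'g \<Rightarrow> complex" and x :: "'i \<Rightarrow> 'g"
  assumes w: "sym_submult_weight w" and Q: "unit_nbhd Q" and Wc: "continuous_on UNIV W"
    and MW2: "(\<lambda>y. complex_of_real (locmax \<mu> Q W y)) \<in> Lpv \<mu> 1 (\<lambda>y. w y / \<Delta> y)"
    and X: "rel_separated I x"
  obtains B where "B > 0"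
    "\<And>y E. finite E \<Longrightarrow> E \<subseteq> I \<Longrightarrow> (\<Sum>i\<in>E. w (- x i + y) * cmod (W (- x i + y))) \<le> B"
proof -
  define V where "V = interior Q"
  have Qc: "compact Q" and V0: "0 \<in> V" using Q unfolding unit_nbhd_def V_def by auto
  have Vo: "open V" and VQ: "V \<subseteq> Q" unfolding V_def by (auto simp: interior_subset)
  have wc: "continuous_on UNIV w" and wpos: "\<And>y. w y > 0" and wsub: "\<And>a b. w (a + b) \<le> w a * w b"
    using w unfolding sym_submult_weight_def by auto
  obtain Cw where Cw: "Cw > 0" "\<And>q. q \<in> Q \<Longrightarrow> w q \<le> Cw" using compact_bound[OF Qc wc] by blast
  define Dset where "Dset = (\<lambda>p. fst p + - snd p) ` (Q \<times> Q)"
  have Dc: "compact Dset" unfolding Dset_def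
    by (intro compact_continuous_image compact_Times Qc cont_add2 cont_minus2 continuous_on_fst continuous_on_snd continuous_on_id)
  have VD: "V \<subseteq> Dset"
  proof
    fix v assume "v \<in> V"
    then have "(v, 0) \<in> Q \<times> Q" using VQ Q unfolding unit_nbhd_def by (auto dest: interior_subset[THEN subsetD])
    then show "v \<in> Dset" unfolding Dset_def by (rule image_eqI[rotated]) simp
  qed
  have Vb: "V \<in> sets borel" using Vo by simp
  have Vpos: "0 < emeasure \<mu> V" using emeasure_open[OF Vo] V0 by auto
  have Vfin: "emeasure \<mu> V < \<infinity>"
    using emeasure_mono[OF VQ, of \<mu>] emeasure_compact[OF Qc] Qc by (auto simp: borel_closed compact_imp_closed)
  have Db: "Dset \<in> sets borel" using Dc by (simp add: borel_closed compact_imp_closed)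
  have Dfin: "emeasure \<mu> Dset < \<infinity>" by (rule emeasure_compact[OF Dc])
  define mVr where "mVr = measure \<mu> V"
  define mD where "mD = measure \<mu> Dset"
  have eV: "emeasure \<mu> V = ennreal mVr" unfolding mVr_def by (rule emeasure_eq_ennreal_measure) (use Vfin in auto)
  have eD: "emeasure \<mu> Dset = ennreal mD" unfolding mD_def by (rule emeasure_eq_ennreal_measure) (use Dfin in auto)
  have mVpos: "mVr > 0" using Vpos eV by simp
  have "emeasure \<mu> V \<le> emeasure \<mu> Dset" by (rule emeasure_mono[OF VD]) (use Db in simp)
  moreover have mDnn: "mD \<ge> 0" unfolding mD_def by simp
  ultimately have mVD: "mVr \<le> mD" using eV eD by simp
  define cD where "cD = mVr / mD"
  have cDpos: "cD > 0" unfolding cD_def using mVpos mVD by simp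
  have Dlow: "cD \<le> \<Delta> v" if v: "v \<in> Q" for v
  proof -
    define A where "A = (\<lambda>y. y + - v) ` V"
    have Ab: "A \<in> sets borel" unfolding A_def by (rule radd_borel[OF Vb])
    have AV: "(\<lambda>y. y + v) ` A = V" unfolding A_def radd_image_image by simp
    have AD: "A \<subseteq> Dset"
    proof
      fix a assume "a \<in> A"
      then obtain y where y: "y \<in> V" "a = y + - v" unfolding A_def by auto
      then have "(y, v) \<in> Q \<times> Q" using VQ v by auto
      then show "a \<in> Dset" unfolding Dset_def using y by (auto intro!: image_eqI[where x="(y,v)"])
    qed
    have "ennreal mVr = ennreal (\<Delta> v) * emeasure \<mu> A"
      using emeasure_radd[OF Ab, of v] AV eV by simp
    also have "\<dots> \<le> ennreal (\<Delta> v) * emeasure \<mu> Dset"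
      by (intro mult_left_mono emeasure_mono[OF AD]) (use Db in auto)
    also have "\<dots> = ennreal (\<Delta> v * mD)" using eD Delta_pos[of v] mDnn by (simp add: ennreal_mult)
    finally have "mVr \<le> \<Delta> v * mD" using Delta_pos[of v] mVD mVpos
      by (subst (asm) ennreal_le_iff) (auto intro!: mult_nonneg_nonneg)
    then show ?thesis unfolding cD_def using mVpos mVD by (simp add: divide_le_eq mult.commute)
  qed
  have Dmult: "\<Delta> (a + b) = \<Delta> a * \<Delta> b" for a b by (rule Delta_mult[OF Vb Vpos Vfin])
  define nV where "nV = uminus ` V"
  have nVo: "open nV" unfolding nV_def by (rule open_uminus[OF Vo])
  have nVb: "nV \<in> sets borel" using nVo by simp
  have nVpos: "0 < emeasure \<mu> nV" using emeasure_open[OF nVo] V0 unfolding nV_def by force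
  have nVc: "compact (uminus ` Q)"
    by (rule compact_continuous_image[OF continuous_on_subset[OF cont_uminus] Qc]) auto
  have "emeasure \<mu> nV \<le> emeasure \<mu> (uminus ` Q)" unfolding nV_def
    by (rule emeasure_mono) (use VQ nVc in \<open>auto simp: borel_closed compact_imp_closed\<close>)
  then have nVfin: "emeasure \<mu> nV < \<infinity>" using emeasure_compact[OF nVc] by (rule le_less_trans)
  define mV where "mV = measure \<mu> nV"
  have enV: "emeasure \<mu> nV = ennreal mV" unfolding mV_def by (rule emeasure_eq_ennreal_measure) (use nVfin in auto)
  have mVp: "mV > 0" using nVpos enV by simp
  define S where "S z = (\<lambda>y. y + z) ` nV" for z
  have Sb: "S z \<in> sets borel" for z unfolding S_def by (rule radd_borel[OF nVb])
  have eS: "emeasure \<mu> (S z) = ennreal (\<Delta> z * mV)" for z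
    unfolding S_def using emeasure_radd[OF nVb, of z] enV Delta_pos[of z] mVp by (simp add: ennreal_mult)
  have Smeas: "measure \<mu> (S z) = \<Delta> z * mV" for z
    using eS[of z] Delta_pos[of z] mVp by (simp add: measure_def)
  have Sfin: "emeasure \<mu> (S z) < \<infinity>" for z using eS[of z] by simp
  define L where "L z = locmax \<mu> Q W z" for z
  define H where "H z = w z / \<Delta> z * cmod (complex_of_real (L z))" for z
  have Hnn: "H z \<ge> 0" for z unfolding H_def using wpos[of z] Delta_pos[of z] by simp
  have "integrable \<mu> (\<lambda>y. H y powr 1)" using MW2 unfolding Lpv_def H_def L_def by simp
  moreover have "(\<lambda>y. H y powr 1) = H" using Hnn by (intro ext) simp
  ultimately have Hint: "integrable \<mu> H" by simp
  define F where "F z = w z * cmod (W z)" for z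
  have kp: "F z * (cD / (Cw * \<Delta> z)) \<le> H z'" if z': "z' \<in> S z" for z z'
  proof -
    obtain v where v: "v \<in> V" "z' = - v + z" using z' unfolding S_def nV_def by auto
    have zv: "z = v + z'" using v by (simp add: add.assoc[symmetric])
    have "z \<in> (\<lambda>q. q + z') ` interior Q" using v zv unfolding V_def by auto
    then have c1: "cmod (W z) \<le> L z'" unfolding L_def by (rule locmax_ge[OF Qc Wc])
    have c2: "L z' \<le> cmod (complex_of_real (L z'))" by simp
    have "w z \<le> w v * w z'" using wsub[of v z'] zv by simp
    also have "\<dots> \<le> Cw * w z'" using Cw(2)[of v] v VQ wpos[of z'] by (intro mult_right_mono) auto
    finally have c3: "w z \<le> Cw * w z'" .
    have "cD * \<Delta> z' \<le> \<Delta> v * \<Delta> z'" using Dlow[of v] v VQ Delta_pos[of z'] by (intro mult_right_mono) auto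
    then have c4: "cD * \<Delta> z' \<le> \<Delta> z" using Dmult[of v z'] zv by simp
    define G' where "G' = w z' * cmod (complex_of_real (L z'))"
    have G'nn: "G' \<ge> 0" unfolding G'_def using wpos[of z'] by simp
    have "F z \<le> (Cw * w z') * cmod (complex_of_real (L z'))"
      unfolding F_def using c1 c2 c3 wpos[of z] by (intro mult_mono) auto
    then have c5: "F z \<le> Cw * G'" unfolding G'_def by (simp add: mult_ac)
    have "F z * (cD / (Cw * \<Delta> z)) \<le> (Cw * G') * (cD / (Cw * \<Delta> z))"
      using c5 cDpos Cw(1) Delta_pos[of z] by (intro mult_right_mono) auto
    also have "\<dots> = G' * cD / \<Delta> z" using Cw(1) by (simp add: field_simps)
    also have "\<dots> \<le> G' * cD / (cD * \<Delta> z')"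
      using c4 G'nn cDpos Delta_pos[of z'] Delta_pos[of z] by (intro divide_left_mono) auto
    also have "\<dots> = H z'" unfolding H_def G'_def using cDpos by (simp add: field_simps)
    finally show ?thesis .
  qed
  have iS: "integrable \<mu> (indicator (S z) :: 'g \<Rightarrow> real)" for z
    using Sb[of z] Sfin[of z] by (intro integrable_real_indicator) auto
  have iSH: "integrable \<mu> (\<lambda>z'. indicator (S z) z' * H z')" for z
    using integrable_real_mult_indicator[OF _ Hint, of "S z"] Sb[of z] by (simp add: mult.commute)
  define \<kappa> where "\<kappa> = cD * mV / Cw"
  have kpos: "\<kappa> > 0" unfolding \<kappa>_def using cDpos mVp Cw by simp
  have kp2: "F z * \<kappa> \<le> (\<integral>z'. indicator (S z) z' * H z' \<partial>\<mu>)" for z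
  proof -
    have "F z * \<kappa> = (F z * (cD / (Cw * \<Delta> z))) * measure \<mu> (S z)"
      unfolding Smeas \<kappa>_def using Delta_pos[of z] Cw(1) by (simp add: field_simps)
    also have "\<dots> = (\<integral>z'. (F z * (cD / (Cw * \<Delta> z))) * indicator (S z) z' \<partial>\<mu>)"
      by (simp add: space_mu)
    also have "\<dots> \<le> (\<integral>z'. indicator (S z) z' * H z' \<partial>\<mu>)"
    proof (rule integral_mono)
      show "integrable \<mu> (\<lambda>z'. F z * (cD / (Cw * \<Delta> z)) * indicator (S z) z')" using iS by auto
      show "integrable \<mu> (\<lambda>z'. indicator (S z) z' * H z')" by (rule iSH)
      fix z' show "F z * (cD / (Cw * \<Delta> z)) * indicator (S z) z' \<le> indicator (S z) z' * H z'"
        using kp[of z' z] by (cases "z' \<in> S z") auto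
    qed
    finally show ?thesis .
  qed
  obtain N :: nat where N: "\<And>t. finite {i\<in>I. t \<in> (\<lambda>q. x i + q) ` Q}" "\<And>t. card {i\<in>I. t \<in> (\<lambda>q. x i + q) ` Q} \<le> N"
    using X Q unfolding rel_separated_def by blast
  have sub: "{i\<in>I. z' \<in> S (- x i + y)} \<subseteq> {i\<in>I. y + - z' \<in> (\<lambda>q. x i + q) ` Q}" for y z'
  proof safe
    fix i assume i: "i \<in> I" "z' \<in> S (- x i + y)"
    then obtain v where v: "v \<in> V" "z' = - v + (- x i + y)" unfolding S_def nV_def by auto
    have "y + - z' = x i + v" using v by (simp add: minus_add add.assoc)
    then show "y + - z' \<in> (\<lambda>q. x i + q) ` Q" using v VQ by auto
  qed
  have finS: "finite {i\<in>I. z' \<in> S (- x i + y)}" for y z' by (rule finite_subset[OF sub N(1)])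
  have cardS: "card {i\<in>I. z' \<in> S (- x i + y)} \<le> N" for y z'
    using card_mono[OF N(1) sub] N(2) le_trans by blast
  define B where "B = max (real N * integral\<^sup>L \<mu> H / \<kappa>) 1"
  show ?thesis
  proof (rule that[of B])
    show "B > 0" unfolding B_def by simp
    fix y E assume E: "finite E" "E \<subseteq> I"
    have "(\<Sum>i\<in>E. F (- x i + y)) * \<kappa> = (\<Sum>i\<in>E. F (- x i + y) * \<kappa>)" by (simp add: sum_distrib_right)
    also have "\<dots> \<le> (\<Sum>i\<in>E. \<integral>z'. indicator (S (- x i + y)) z' * H z' \<partial>\<mu>)"
      by (intro sum_mono kp2)
    also have "\<dots> = (\<integral>z'. (\<Sum>i\<in>E. indicator (S (- x i + y)) z' * H z') \<partial>\<mu>)"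
      using iSH by (subst Bochner_Integration.integral_sum) auto
    also have "\<dots> \<le> (\<integral>z'. real N * H z' \<partial>\<mu>)"
    proof (rule integral_mono)
      show "integrable \<mu> (\<lambda>z'. \<Sum>i\<in>E. indicator (S (- x i + y)) z' * H z')" using iSH by auto
      show "integrable \<mu> (\<lambda>z'. real N * H z')" using Hint by auto
      fix z'
      have "(\<Sum>i\<in>E. indicator (S (- x i + y)) z' * H z') = (\<Sum>i\<in>E. indicator (S (- x i + y)) z' :: real) * H z'"
        by (simp add: sum_distrib_right)
      also have "\<dots> \<le> real N * H z'"
        using card_bound_sum_indicator[OF E finS cardS] Hnn[of z'] by (intro mult_right_mono) auto
      finally show "(\<Sum>i\<in>E. indicator (S (- x i + y)) z' * H z') \<le> real N * H z'" .
    qed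
    also have "\<dots> = real N * integral\<^sup>L \<mu> H" by simp
    finally have "(\<Sum>i\<in>E. F (- x i + y)) \<le> real N * integral\<^sup>L \<mu> H / \<kappa>"
      using kpos by (simp add: le_divide_eq)
    then show "(\<Sum>i\<in>E. w (- x i + y) * cmod (W (- x i + y))) \<le> B"
      unfolding B_def F_def by linarith
  qed
qed

end

context hgrp begin

lemma trans_integrable:
  fixes F :: "'g \<Rightarrow> real"
  assumes Fm: "F \<in> borel_measurable borel" and Fnn: "\<And>z. F z \<ge> 0" and Fi: "integrable \<mu> F"
  shows "integrable \<mu> (\<lambda>y. F (a + y))" "(\<integral>y. F (a + y) \<partial>\<mu>) = (\<integral>y. F y \<partial>\<mu>)"
proof -
  have nn: "(\<integral>\<^sup>+y. ennreal (F (a + y)) \<partial>\<mu>) = (\<integral>\<^sup>+y. ennreal (F y) \<partial>\<mu>)"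
    by (rule nn_integral_ladd) (use Fm in measurable)
  also have "\<dots> = ennreal (\<integral>y. F y \<partial>\<mu>)" by (rule nn_integral_eq_integral[OF Fi]) (use Fnn in auto)
  finally have e: "(\<integral>\<^sup>+y. ennreal (F (a + y)) \<partial>\<mu>) = ennreal (\<integral>y. F y \<partial>\<mu>)" .
  have m: "(\<lambda>y. F (a + y)) \<in> borel_measurable \<mu>"
    unfolding meas_mu using Fm borel_measurable_continuous_onI[OF cont_ladd[of UNIV a]] by measurable
  show i: "integrable \<mu> (\<lambda>y. F (a + y))"
    by (rule integrableI_bounded[OF m]) (use e Fnn in simp)
  have "(\<integral>y. F (a + y) \<partial>\<mu>) = enn2real (\<integral>\<^sup>+y. ennreal (F (a + y)) \<partial>\<mu>)"
    by (rule integral_eq_nn_integral[OF m]) (use Fnn in auto)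
  also have "\<dots> = (\<integral>y. F y \<partial>\<mu>)" using e Fnn by (simp add: Bochner_Integration.integral_nonneg)
  finally show "(\<integral>y. F (a + y) \<partial>\<mu>) = (\<integral>y. F y \<partial>\<mu>)" .
qed

end

context hgrp begin

lemma synthesis_part:
  fixes w m :: "'g \<Rightarrow> real" and W :: "'g \<Rightarrow> complex" and x :: "'i \<Rightarrow> 'g"
  assumes w: "sym_submult_weight w" and m: "moderate w m" and r: "r > 1"
    and Wc: "continuous_on UNIV W" and Q: "unit_nbhd Q"
    and MW1: "(\<lambda>y. complex_of_real (locmax \<mu> Q W y)) \<in> Lpv \<mu> 1 w"
    and MW2: "(\<lambda>y. complex_of_real (locmax \<mu> Q W y)) \<in> Lpv \<mu> 1 (\<lambda>y. w y / \<Delta> y)"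
    and X: "rel_separated I x"
  shows "(\<forall>c \<in> ell_space I r (\<lambda>i. m (x i)).
         (AE y in \<mu>. (\<lambda>i. cmod (c i * W (- x i + y))) summable_on I) \<and>
         (\<lambda>y. \<Sum>\<^sub>\<infinity>i\<in>I. c i * W (- x i + y)) \<in> Lpv \<mu> r m) \<and>
      (\<exists>C. \<forall>c \<in> ell_space I r (\<lambda>i. m (x i)).
         Lpv_norm \<mu> r m (\<lambda>y. \<Sum>\<^sub>\<infinity>i\<in>I. c i * W (- x i + y)) \<le> C * ell_norm I r (\<lambda>i. m (x i)) c)"
proof -
  obtain B where B: "B > 0"
    "\<And>y E. finite E \<Longrightarrow> E \<subseteq> I \<Longrightarrow> (\<Sum>i\<in>E. w (- x i + y) * cmod (W (- x i + y))) \<le> B"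
    using sup_bound[OF w Q Wc MW2 X] by blast
  have wc: "continuous_on UNIV w" and wpos: "\<And>y. w y > 0"
    using w unfolding sym_submult_weight_def by auto
  have mc: "continuous_on UNIV m" and mpos: "\<And>y. m y > 0"
    and mmod: "\<And>a b. m (a + b) \<le> m a * w b"
    using m unfolding moderate_def by auto
  have Qc: "compact Q" and Q0: "0 \<in> interior Q" using Q unfolding unit_nbhd_def by auto
  note [measurable] = borel_measurable_continuous_onI[OF wc] borel_measurable_continuous_onI[OF mc]
    borel_measurable_continuous_onI[OF Wc]
  define F where "F z = w z * cmod (W z)" for z
  have Fnn: "F z \<ge> 0" for z unfolding F_def using wpos[of z] by simp
  have Fm[measurable]: "F \<in> borel_measurable borel" unfolding F_def by measurable
  define G where "G z = w z * cmod (complex_of_real (locmax \<mu> Q W z))" for z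
  have Gnn: "G z \<ge> 0" for z unfolding G_def using wpos[of z] by simp
  have "integrable \<mu> (\<lambda>y. G y powr 1)" using MW1 unfolding Lpv_def G_def by simp
  moreover have "(\<lambda>y. G y powr 1) = G" using Gnn by (intro ext) simp
  ultimately have Gint: "integrable \<mu> G" by simp
  have FG: "F z \<le> G z" for z
  proof -
    have "z \<in> (\<lambda>q. q + z) ` interior Q" using Q0 by (auto intro!: image_eqI[where x=0])
    then have "cmod (W z) \<le> locmax \<mu> Q W z" by (rule locmax_ge[OF Qc Wc])
    also have "\<dots> \<le> cmod (complex_of_real (locmax \<mu> Q W z))" by simp
    finally show ?thesis unfolding F_def G_def using wpos[of z] by (intro mult_left_mono) auto
  qed
  have Fint: "integrable \<mu> F"
  proof (rule Bochner_Integration.integrable_bound[OF Gint])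
    show "F \<in> borel_measurable \<mu>" by (simp add: meas_mu)
    show "AE x in \<mu>. norm (F x) \<le> norm (G x)" using FG Fnn Gnn by (intro AE_I2) (simp add: abs_of_nonneg)
  qed
  define LG where "LG = (\<integral>y. G y \<partial>\<mu>)"
  have FLG: "(\<integral>y. F y \<partial>\<mu>) \<le> LG" unfolding LG_def by (rule integral_mono[OF Fint Gint FG])
  have LGnn: "LG \<ge> 0" unfolding LG_def using Gnn by (simp add: Bochner_Integration.integral_nonneg)
  have Ftr: "integrable \<mu> (\<lambda>y. F (a + y))" "(\<integral>y. F (a + y) \<partial>\<mu>) \<le> LG" for a
    using trans_integrable[OF Fm Fnn Fint, of a] FLG by auto
  define Kb where "Kb = 2 powr r * B powr (r - 1)"
  have Kbnn: "Kb \<ge> 0" unfolding Kb_def by simp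
  define Kc where "Kc = Kb * LG"
  have Kcnn: "Kc \<ge> 0" unfolding Kc_def using Kbnn LGnn by simp
  have main: "(AE y in \<mu>. (\<lambda>i. cmod (c i * W (- x i + y))) summable_on I) \<and>
         (\<lambda>y. \<Sum>\<^sub>\<infinity>i\<in>I. c i * W (- x i + y)) \<in> Lpv \<mu> r m \<and>
         Lpv_norm \<mu> r m (\<lambda>y. \<Sum>\<^sub>\<infinity>i\<in>I. c i * W (- x i + y)) \<le> Kc powr (1 / r) * ell_norm I r (\<lambda>i. m (x i)) c"
    if c: "c \<in> ell_space I r (\<lambda>i. m (x i))" for c
  proof -
    define a where "a i = m (x i) * cmod (c i)" for i
    have ann: "a i \<ge> 0" for i unfolding a_def using mpos[of "x i"] by simp
    have asum: "(\<lambda>i. a i powr r) summable_on I" using c unfolding ell_space_def a_def by simp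
    define A where "A = (\<Sum>\<^sub>\<infinity>i\<in>I. a i powr r)"
    have Ann: "A \<ge> 0" unfolding A_def by (intro infsum_nonneg) simp
    have sumA: "(\<Sum>i\<in>E. a i powr r) \<le> A" if "finite E" "E \<subseteq> I" for E
      unfolding A_def by (rule finite_sum_le_infsum[OF asum that]) simp
    define g where "g i y = c i * W (- x i + y)" for i y
    have gm[measurable]: "(\<lambda>y. g i y) \<in> borel_measurable borel" for i
      unfolding g_def using borel_measurable_continuous_onI[OF cont_ladd[of UNIV "- x i"]] by measurable
    have FB: "(\<integral>\<^sup>+y. ennreal ((m y * (\<Sum>i\<in>E. cmod (g i y))) powr r) \<partial>\<mu>) \<le> ennreal (Kc * A)"
      if E: "finite E" "E \<subseteq> I" for E
    proof -
      define \<Psi> where "\<Psi> y = Kb * (\<Sum>i\<in>E. a i powr r * F (- x i + y))" for y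
      have \<Psi>i: "integrable \<mu> \<Psi>" unfolding \<Psi>_def using Ftr(1) by auto
      have \<Psi>nn: "\<Psi> y \<ge> 0" for y unfolding \<Psi>_def using Kbnn Fnn by (intro mult_nonneg_nonneg sum_nonneg) auto
      have PW: "(m y * (\<Sum>i\<in>E. cmod (g i y))) powr r \<le> \<Psi> y" for y
      proof -
        have "m y * (\<Sum>i\<in>E. cmod (g i y)) = (\<Sum>i\<in>E. m y * cmod (g i y))" by (simp add: sum_distrib_left)
        also have "\<dots> \<le> (\<Sum>i\<in>E. a i * F (- x i + y))"
        proof (rule sum_mono)
          fix i
          have "m y \<le> m (x i) * w (- x i + y)" using mmod[of "x i" "- x i + y"] by (simp add: add.assoc[symmetric])
          then have "m y * (cmod (c i) * cmod (W (- x i + y))) \<le> (m (x i) * w (- x i + y)) * (cmod (c i) * cmod (W (- x i + y)))"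
            by (intro mult_right_mono) auto
          then show "m y * cmod (g i y) \<le> a i * F (- x i + y)"
            unfolding g_def a_def F_def by (simp add: norm_mult mult_ac)
        qed
        finally have le1: "m y * (\<Sum>i\<in>E. cmod (g i y)) \<le> (\<Sum>i\<in>E. a i * F (- x i + y))" .
        have "(m y * (\<Sum>i\<in>E. cmod (g i y))) powr r \<le> (\<Sum>i\<in>E. a i * F (- x i + y)) powr r"
          using le1 mpos[of y] r by (intro powr_mono2) (auto intro!: sum_nonneg mult_nonneg_nonneg)
        also have "\<dots> \<le> 2 powr r * B powr (r - 1) * (\<Sum>i\<in>E. a i powr r * F (- x i + y))"
          by (rule finite_holder[OF E(1) ann Fnn _ B(1) r]) (use B(2)[OF E] in \<open>simp add: F_def\<close>)
        finally show ?thesis unfolding \<Psi>_def Kb_def .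
      qed
      have "(\<integral>\<^sup>+y. ennreal ((m y * (\<Sum>i\<in>E. cmod (g i y))) powr r) \<partial>\<mu>) \<le> (\<integral>\<^sup>+y. ennreal (\<Psi> y) \<partial>\<mu>)"
        by (intro nn_integral_mono) (use PW in \<open>auto intro!: ennreal_leI\<close>)
      also have "\<dots> = ennreal (\<integral>y. \<Psi> y \<partial>\<mu>)" by (rule nn_integral_eq_integral[OF \<Psi>i]) (use \<Psi>nn in auto)
      also have "(\<integral>y. \<Psi> y \<partial>\<mu>) = Kb * (\<Sum>i\<in>E. a i powr r * (\<integral>y. F (- x i + y) \<partial>\<mu>))"
        unfolding \<Psi>_def using Ftr(1) by (subst integral_mult_right_zero) (subst Bochner_Integration.integral_sum; simp)
      also have "\<dots> \<le> Kb * (\<Sum>i\<in>E. a i powr r * LG)"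
        using Ftr(2) Kbnn by (intro mult_left_mono sum_mono) auto
      also have "\<dots> = Kc * (\<Sum>i\<in>E. a i powr r)" unfolding Kc_def by (simp add: sum_distrib_left sum_distrib_right mult_ac)
      also have "\<dots> \<le> Kc * A" using sumA[OF E] Kcnn by (intro mult_left_mono)
      finally show ?thesis by (simp add: ennreal_leI)
    qed
    define J where "J = {i\<in>I. a i powr r \<noteq> 0}"
    have Jc: "countable J" unfolding J_def by (rule summable_countable_real[OF asum])
    have JI: "J \<subseteq> I" unfolding J_def by auto
    have c0: "c i = 0" if "i \<in> I - J" for i
      using that mpos[of "x i"] unfolding J_def a_def by auto
    have g0: "g i y = 0" if "i \<in> I - J" for i y using c0[OF that] by (simp add: g_def)
    obtain En where En: "\<And>n. finite (En n)" "\<And>n. En n \<subseteq> J" "incseq En"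
      "\<And>X. finite X \<Longrightarrow> X \<subseteq> J \<Longrightarrow> \<exists>n. X \<subseteq> En n"
      using countable_exhaust[OF Jc] by blast
    have EnI: "En n \<subseteq> I" for n using En(2) JI by blast
    define T where "T n y = (\<Sum>i\<in>En n. cmod (g i y))" for n y
    have Tnn: "T n y \<ge> 0" for n y unfolding T_def by (intro sum_nonneg) auto
    have Tmono: "T n y \<le> T k y" if "n \<le> k" for n k y
      unfolding T_def using En(3) that by (intro sum_mono2[OF En(1)]) (auto simp: incseq_def)
    define \<Phi> where "\<Phi> n y = ennreal ((m y * T n y) powr r)" for n y
    have \<Phi>inc: "incseq \<Phi>"
      unfolding incseq_def le_fun_def \<Phi>_def
    proof (intro allI impI ennreal_leI powr_mono2)
      fix n k :: nat and y assume "n \<le> k"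
      show "0 \<le> r" using r by simp
      show "0 \<le> m y * T n y" using Tnn[of n y] mpos[of y] by simp
      show "m y * T n y \<le> m y * T k y" using Tmono[OF \<open>n \<le> k\<close>, of y] mpos[of y] by simp
    qed
    have Tm[measurable]: "(\<lambda>y. T n y) \<in> borel_measurable borel" for n unfolding T_def by measurable
    have \<Phi>m[measurable]: "\<Phi> n \<in> borel_measurable \<mu>" for n unfolding meas_mu \<Phi>_def by measurable
    have \<Phi>B: "(\<integral>\<^sup>+y. \<Phi> n y \<partial>\<mu>) \<le> ennreal (Kc * A)" for n
      using FB[OF En(1) EnI] unfolding \<Phi>_def T_def .
    define SUP\<Phi> where "SUP\<Phi> y = (SUP n. \<Phi> n y)" for y
    have intSUP: "(\<integral>\<^sup>+y. SUP\<Phi> y \<partial>\<mu>) \<le> ennreal (Kc * A)"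
      unfolding SUP\<Phi>_def nn_integral_monotone_convergence_SUP[OF \<Phi>inc \<Phi>m] by (rule SUP_least[OF \<Phi>B])
    have SUPm: "SUP\<Phi> \<in> borel_measurable \<mu>" unfolding SUP\<Phi>_def by measurable
    have AEfin: "AE y in \<mu>. SUP\<Phi> y \<noteq> \<infinity>"
      by (rule nn_integral_PInf_AE[OF SUPm]) (use le_less_trans[OF intSUP ennreal_less_top] in simp)
    define Pm where "Pm y = ((SUP n. ennreal (T n y)) < top)" for y
    have Pm_abs: "(\<lambda>i. cmod (g i y)) summable_on J" if "Pm y" for y
    proof -
      have "(SUP n. ennreal (T n y)) < top" using that unfolding Pm_def .
      then obtain b where b: "b \<ge> 0" "(SUP n. ennreal (T n y)) = ennreal b"
        unfolding less_top_ennreal by (elim exE conjE) simp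
      have "T n y \<le> b" for n
      proof -
        have "ennreal (T n y) \<le> (SUP n. ennreal (T n y))" by (rule SUP_upper) simp
        then have "ennreal (T n y) \<le> ennreal b" using b(2) by simp
        then show ?thesis using b(1) by (simp add: ennreal_le_iff)
      qed
      then show ?thesis by (intro exhaust_summable[OF En]) (auto simp: T_def)
    qed
    have Pm_I: "(\<lambda>i. cmod (g i y)) summable_on I" if "Pm y" for y
    proof -
      have "(\<lambda>i. cmod (g i y)) summable_on J \<longleftrightarrow> (\<lambda>i. cmod (g i y)) summable_on I"
        by (rule summable_on_cong_neutral) (use g0 JI in auto)
      then show ?thesis using Pm_abs[OF that] by simp
    qed
    have Pm_P: "(\<lambda>i. g i y) summable_on J" if "Pm y" for y
      by (rule summable_on_iff_abs_summable_on_complex[THEN iffD2, OF Pm_abs[OF that]])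
    have notPm: "\<not> (\<lambda>i. g i y) summable_on I" if "\<not> Pm y" for y
    proof
      assume "(\<lambda>i. g i y) summable_on I"
      then have "(\<lambda>i. cmod (g i y)) summable_on I" by (rule summable_on_iff_abs_summable_on_complex[THEN iffD1])
      then have sJ: "(\<lambda>i. cmod (g i y)) summable_on J" using JI by (rule summable_on_subset_banach)
      have "T n y \<le> (\<Sum>\<^sub>\<infinity>i\<in>J. cmod (g i y))" for n
        unfolding T_def by (rule finite_sum_le_infsum[OF sJ En(1) En(2)]) simp
      then have "(SUP n. ennreal (T n y)) \<le> ennreal (\<Sum>\<^sub>\<infinity>i\<in>J. cmod (g i y))"
        by (intro SUP_least ennreal_leI)
      then have "Pm y" unfolding Pm_def by (simp add: top.not_eq_extremum le_less_trans)
      then show False using that by simp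
    qed
    have Sinf: "(\<Sum>\<^sub>\<infinity>i\<in>I. g i y) = (\<Sum>\<^sub>\<infinity>i\<in>J. g i y)" for y
      by (rule infsum_cong_neutral) (use g0 JI in auto)
    define S where "S = (\<lambda>y. \<Sum>\<^sub>\<infinity>i\<in>I. c i * W (- x i + y))"
    have Sg: "S y = (\<Sum>\<^sub>\<infinity>i\<in>I. g i y)" for y unfolding S_def g_def ..
    have Slim: "(\<lambda>n. sum (\<lambda>i. g i y) (En n)) \<longlonglongrightarrow> S y" if "Pm y" for y
      unfolding Sg Sinf by (rule exhaust_tendsto[OF En Pm_P[OF that]])
    have S0: "S y = 0" if "\<not> Pm y" for y unfolding Sg by (rule infsum_not_exists[OF notPm[OF that]])
    have Seq: "S = (\<lambda>y. if Pm y then lim (\<lambda>n. sum (\<lambda>i. g i y) (En n)) else 0)"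
      using Slim S0 by (auto intro!: ext limI[symmetric])
    have Pmm[measurable]: "Measurable.pred borel Pm" unfolding Pm_def by measurable
    have Sm: "S \<in> borel_measurable borel" unfolding Seq by measurable
    have pt: "ennreal ((m y * cmod (S y)) powr r) \<le> SUP\<Phi> y" for y
    proof (cases "Pm y")
      case True
      have lim: "(\<lambda>n. ennreal ((m y * cmod (sum (\<lambda>i. g i y) (En n))) powr r)) \<longlonglongrightarrow> ennreal ((m y * cmod (S y)) powr r)"
      proof (rule tendsto_ennrealI, rule tendsto_powr')
        show "(\<lambda>n. m y * cmod (sum (\<lambda>i. g i y) (En n))) \<longlonglongrightarrow> m y * cmod (S y)"
          by (intro tendsto_mult tendsto_const tendsto_norm Slim[OF True])
        show "(\<lambda>n. r) \<longlonglongrightarrow> r" by simp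
        show "m y * cmod (S y) \<noteq> 0 \<or> 0 < r \<and> (\<forall>\<^sub>F n in sequentially. 0 \<le> m y * cmod (sum (\<lambda>i. g i y) (En n)))"
          using r mpos[of y] by (auto intro!: always_eventually mult_nonneg_nonneg less_imp_le)
      qed
      show ?thesis
      proof (rule LIMSEQ_le_const2[OF lim], intro exI allI impI)
        fix n
        have "cmod (sum (\<lambda>i. g i y) (En n)) \<le> T n y" unfolding T_def by (rule norm_sum)
        then have "ennreal ((m y * cmod (sum (\<lambda>i. g i y) (En n))) powr r) \<le> \<Phi> n y"
          unfolding \<Phi>_def using mpos[of y] r
          by (intro ennreal_leI powr_mono2 mult_left_mono) (auto intro!: mult_nonneg_nonneg less_imp_le)
        also have "\<dots> \<le> SUP\<Phi> y" unfolding SUP\<Phi>_def by (rule SUP_upper) simp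
        finally show "ennreal ((m y * cmod (sum (\<lambda>i. g i y) (En n))) powr r) \<le> SUP\<Phi> y" .
      qed
    next
      case False
      then show ?thesis using S0[OF False] by simp
    qed
    have intS: "(\<integral>\<^sup>+y. ennreal ((m y * cmod (S y)) powr r) \<partial>\<mu>) \<le> ennreal (Kc * A)"
      by (rule order_trans[OF nn_integral_mono intSUP]) (rule pt)
    have AEs: "AE y in \<mu>. (\<lambda>i. cmod (c i * W (- x i + y))) summable_on I"
      using AEfin
    proof eventually_elim
      fix y assume "SUP\<Phi> y \<noteq> \<infinity>"
      then have "SUP\<Phi> y < top" by (simp add: less_top[symmetric])
      then obtain s where s: "s \<ge> 0" "SUP\<Phi> y = ennreal s"
        unfolding less_top_ennreal by (elim exE conjE) simp
      have "T n y \<le> s powr (1 / r) / m y" for n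
      proof -
        have "\<Phi> n y \<le> SUP\<Phi> y" unfolding SUP\<Phi>_def by (rule SUP_upper) simp
        then have "(m y * T n y) powr r \<le> s" unfolding \<Phi>_def using s by (simp add: ennreal_le_iff)
        then have "((m y * T n y) powr r) powr (1 / r) \<le> s powr (1 / r)"
          using r by (intro powr_mono2) auto
        moreover have "((m y * T n y) powr r) powr (1 / r) = m y * T n y"
          using r mpos[of y] Tnn[of n y] by (simp add: powr_powr)
        ultimately have "m y * T n y \<le> s powr (1 / r)" by simp
        then show ?thesis using mpos[of y] by (simp add: le_divide_eq mult.commute)
      qed
      then have "(SUP n. ennreal (T n y)) \<le> ennreal (s powr (1 / r) / m y)"
        by (intro SUP_least ennreal_leI)
      then have "Pm y" unfolding Pm_def by (simp add: top.not_eq_extremum le_less_trans)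
      then show "(\<lambda>i. cmod (c i * W (- x i + y))) summable_on I" using Pm_I unfolding g_def by blast
    qed
    have fnn: "(m y * cmod (S y)) powr r \<ge> 0" for y by simp
    have Sm': "(\<lambda>y. (m y * cmod (S y)) powr r) \<in> borel_measurable \<mu>" unfolding meas_mu using Sm by measurable
    have Sint: "integrable \<mu> (\<lambda>y. (m y * cmod (S y)) powr r)"
    proof (rule integrableI_bounded[OF Sm'])
      have "(\<integral>\<^sup>+y. ennreal (norm ((m y * cmod (S y)) powr r)) \<partial>\<mu>) = (\<integral>\<^sup>+y. ennreal ((m y * cmod (S y)) powr r) \<partial>\<mu>)"
        by simp
      also have "\<dots> < \<infinity>" using intS by (simp add: le_less_trans)
      finally show "(\<integral>\<^sup>+y. ennreal (norm ((m y * cmod (S y)) powr r)) \<partial>\<mu>) < \<infinity>" .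
    qed
    have SL: "S \<in> Lpv \<mu> r m" unfolding Lpv_def using Sm Sint by (simp add: meas_mu)
    have "(\<integral>y. (m y * cmod (S y)) powr r \<partial>\<mu>) = enn2real (\<integral>\<^sup>+y. ennreal ((m y * cmod (S y)) powr r) \<partial>\<mu>)"
      by (rule integral_eq_nn_integral[OF Sm']) simp
    also have "\<dots> \<le> enn2real (ennreal (Kc * A))" by (rule enn2real_mono[OF intS]) simp
    also have "\<dots> = Kc * A" using Kcnn Ann by simp
    finally have Ib: "(\<integral>y. (m y * cmod (S y)) powr r \<partial>\<mu>) \<le> Kc * A" .
    have "Lpv_norm \<mu> r m S = (\<integral>y. (m y * cmod (S y)) powr r \<partial>\<mu>) powr (1 / r)" unfolding Lpv_norm_def ..
    also have "\<dots> \<le> (Kc * A) powr (1 / r)"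
      using Ib r by (intro powr_mono2) (auto intro!: Bochner_Integration.integral_nonneg)
    also have "\<dots> = Kc powr (1 / r) * A powr (1 / r)" using Kcnn Ann by (simp add: powr_mult)
    also have "A powr (1 / r) = ell_norm I r (\<lambda>i. m (x i)) c" unfolding ell_norm_def A_def a_def ..
    finally have Nb: "Lpv_norm \<mu> r m S \<le> Kc powr (1 / r) * ell_norm I r (\<lambda>i. m (x i)) c" .
    show ?thesis using AEs SL Nb unfolding S_def by blast
  qed
  show ?thesis using main by blast
qed

end

theorem mainTheorem17:
  fixes \<mu> :: "'g::{group_add,t2_space,second_countable_topology} measure"
    and \<Delta> w m :: "'g \<Rightarrow> real"
    and smul :: "complex \<Rightarrow> 'h::ab_group_add \<Rightarrow> 'h" and ip :: "'h \<Rightarrow> 'h \<Rightarrow> complex"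
    and \<pi> :: "'g \<Rightarrow> 'h \<Rightarrow> 'h" and u :: 'h
    and K W :: "'g \<Rightarrow> complex" and r :: real and Q :: "'g set"
    and I :: "'i set" and x :: "'i \<Rightarrow> 'g"
  assumes G: "lc_haar_group \<mu> \<Delta>"
    and w: "sym_submult_weight w"
    and H: "hilbert_space smul ip"
    and rep: "unitary_rep smul ip \<pi>"
    and adm: "admissible \<mu> ip \<pi> u"
    and Kdef: "K = (\<lambda>y. ip u (\<pi> y u))"
    and K_int: "\<forall>p>1. K \<in> Lpv \<mu> p w"
    and r: "r > 1"
    and m: "moderate w m"
    and RC: "conv_bounded \<mu> r m K"
    and W_cont: "continuous_on UNIV W"
    and WK: "\<forall>y. integrable \<mu> (\<lambda>z. W z * K (- z + y)) \<and> conv \<mu> W K y = K y"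
    and Q: "unit_nbhd Q"
    and MW1: "(\<lambda>y. complex_of_real (locmax \<mu> Q W y)) \<in> Lpv \<mu> 1 w"
    and MW2: "(\<lambda>y. complex_of_real (locmax \<mu> Q W y)) \<in> Lpv \<mu> 1 (\<lambda>y. w y / \<Delta> y)"
    and X: "rel_separated I x"
  shows
    "(\<forall>U \<psi>. unit_nbhd U \<and> BUPU U I x \<psi> \<longrightarrow>
        (\<forall>f \<in> Lpv \<mu> r m.
           (\<forall>i\<in>I. integrable \<mu> (\<lambda>y. f y * cnj (complex_of_real (\<psi> i y)))) \<and>
           (\<lambda>i. \<integral>y. f y * cnj (complex_of_real (\<psi> i y)) \<partial>\<mu>) \<in> ell_space I r (\<lambda>i. m (x i))) \<and>
        (\<exists>C. \<forall>f \<in> Lpv \<mu> r m.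
           ell_norm I r (\<lambda>i. m (x i)) (\<lambda>i. \<integral>y. f y * cnj (complex_of_real (\<psi> i y)) \<partial>\<mu>)
             \<le> C * Lpv_norm \<mu> r m f))
     \<and>
     ((\<forall>c \<in> ell_space I r (\<lambda>i. m (x i)).
         (AE y in \<mu>. (\<lambda>i. cmod (c i * W (- x i + y))) summable_on I) \<and>
         (\<lambda>y. \<Sum>\<^sub>\<infinity>i\<in>I. c i * W (- x i + y)) \<in> Lpv \<mu> r m) \<and>
      (\<exists>C. \<forall>c \<in> ell_space I r (\<lambda>i. m (x i)).
         Lpv_norm \<mu> r m (\<lambda>y. \<Sum>\<^sub>\<infinity>i\<in>I. c i * W (- x i + y)) \<le> C * ell_norm I r (\<lambda>i. m (x i)) c))"
proof -
  interpret hgrp \<mu> \<Delta> by unfold_locales (rule G)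
  show ?thesis
    apply (rule conjI)
     apply (intro allI impI, elim conjE)
     apply (rule analysis_part[OF w m r]; assumption)
    apply (rule synthesis_part[OF w m r W_cont Q MW1 MW2 X])
    done
qed

end
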